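(* Let $\Omega_S$ be the infinite square lattice graph, i.e. the graph with vertex set $\mathbb{Z}^2$ in which $(a,b)$ and $(c,d)$ are adjacent iff $|a-c|+|b-d|=1$. Then $\chi_{td}(\Omega_S) = 8$.
   Context: For a (possibly infinite) simple graph $G$ and a positive integer $k$, a proper $k$-total difference labeling of $G$ is a function $f: V(G)\to\{1,\dots,k\}$, extended to edges by $f(\{u,v\}) = |f(u)-f(v)|$, such that: (i) adjacent vertices receive different labels; (ii) two distinct edges sharing a vertex receive different labels; (iii) no edge receives the same label as either of its endpoints. $\chi_{td}(G)$ denotes the smallest $k$ for which $G$ has a proper $k$-total difference labeling. *)

theory Defs
  imports Main
begin

text \<open>A (possibly infinite) simple graph is given by a symmetric, irreflexive
adjacency relation E on the vertex type. Labels are integers in {1..k};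
the label of edge {u,v} is |f u - f v|.\<close>

definition proper_td_labeling :: "('a \<Rightarrow> 'a \<Rightarrow> bool) \<Rightarrow> nat \<Rightarrow> ('a \<Rightarrow> int) \<Rightarrow> bool" where
  "proper_td_labeling E k f \<longleftrightarrow>
     (\<forall>v. f v \<in> {1..int k}) \<and>
     (\<forall>u v. E u v \<longrightarrow> f u \<noteq> f v) \<and>
     (\<forall>u v w. E u v \<and> E u w \<and> v \<noteq> w \<longrightarrow> \<bar>f u - f v\<bar> \<noteq> \<bar>f u - f w\<bar>) \<and>
     (\<forall>u v. E u v \<longrightarrow> \<bar>f u - f v\<bar> \<noteq> f u \<and> \<bar>f u - f v\<bar> \<noteq> f v)"

definition chi_td :: "('a \<Rightarrow> 'a \<Rightarrow> bool) \<Rightarrow> nat" where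
  "chi_td E = (LEAST k. k > 0 \<and> (\<exists>f. proper_td_labeling E k f))"

definition square_lattice :: "int \<times> int \<Rightarrow> int \<times> int \<Rightarrow> bool" where
  "square_lattice p q \<longleftrightarrow> \<bar>fst p - fst q\<bar> + \<bar>snd p - snd q\<bar> = 1"

end

theory Submission imports Defs begin
definition okp :: "int \<Rightarrow> int \<Rightarrow> bool" where
 "okp x y \<longleftrightarrow> y \<in> {1..7} \<and> x \<noteq> y \<and> \<bar>x - y\<bar> \<noteq> x \<and> \<bar>x - y\<bar> \<noteq> y"

lemma int7: "(x::int) \<in> {1..7} \<longleftrightarrow> x = 1 \<or> x = 2 \<or> x = 3 \<or> x = 4 \<or> x = 5 \<or> x = 6 \<or> x = 7"
  by auto

lemma d3: "okp 3 y \<Longrightarrow> \<bar>3-y\<bar> \<in> {1,2,4::int}" unfolding okp_def int7 by auto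
lemma d4: "okp 4 y \<Longrightarrow> \<bar>4-y\<bar> \<in> {1,2,3::int}" unfolding okp_def int7 by auto
lemma d2: "okp 2 y \<Longrightarrow> y \<noteq> 3 \<Longrightarrow> \<bar>2-y\<bar> \<in> {3,4,5::int}" unfolding okp_def int7 by auto
lemma d5: "okp 5 y \<Longrightarrow> y \<noteq> 2 \<Longrightarrow> \<bar>5-y\<bar> \<in> {1,2,4::int}" unfolding okp_def int7 by auto
lemma d6: "okp 6 y \<Longrightarrow> y \<noteq> 2 \<Longrightarrow> \<bar>6-y\<bar> \<in> {1,2,5::int}" unfolding okp_def int7 by auto
lemma d1: "okp 1 y \<Longrightarrow> y \<in> {1,7} \<Longrightarrow> y = 7" unfolding okp_def by auto
lemma d7: "okp 7 y \<Longrightarrow> y \<in> {1,7} \<Longrightarrow> y = 1" unfolding okp_def by auto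
lemma pig: "(a::int) \<in> {p,q,r} \<Longrightarrow> b \<in> {p,q,r} \<Longrightarrow> c \<in> {p,q,r} \<Longrightarrow> d \<in> {p,q,r} \<Longrightarrow>
  a \<noteq> b \<Longrightarrow> a \<noteq> c \<Longrightarrow> a \<noteq> d \<Longrightarrow> b \<noteq> c \<Longrightarrow> b \<noteq> d \<Longrightarrow> c \<noteq> d \<Longrightarrow> False" by auto


lemma adj: "square_lattice (a,b) (a+1,b)" "square_lattice (a,b) (a-1,b)"
  "square_lattice (a,b) (a,b+1)" "square_lattice (a,b) (a,b-1)"
  by (auto simp: square_lattice_def)

lemma loc:
  fixes a b :: int
  assumes P: "proper_td_labeling square_lattice k f" and k: "k \<le> 7"
  defines "x \<equiv> f (a,b)" and "y1 \<equiv> f (a+1,b)" and "y2 \<equiv> f (a-1,b)" and "y3 \<equiv> f (a,b+1)" and "y4 \<equiv> f (a,b-1)"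
  shows "x \<in> {1..7} \<and> okp x y1 \<and> okp x y2 \<and> okp x y3 \<and> okp x y4 \<and>
    \<bar>x-y1\<bar> \<noteq> \<bar>x-y2\<bar> \<and> \<bar>x-y1\<bar> \<noteq> \<bar>x-y3\<bar> \<and> \<bar>x-y1\<bar> \<noteq> \<bar>x-y4\<bar> \<and>
    \<bar>x-y2\<bar> \<noteq> \<bar>x-y3\<bar> \<and> \<bar>x-y2\<bar> \<noteq> \<bar>x-y4\<bar> \<and> \<bar>x-y3\<bar> \<noteq> \<bar>x-y4\<bar>"
proof -
  have r: "\<forall>v. f v \<in> {1..7}"
  proof
    fix v
    have "f v \<in> {1..int k}" using P unfolding proper_td_labeling_def by blast
    moreover have "int k \<le> 7" using k by simp
    ultimately show "f v \<in> {1..7}" by simp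
  qed
  have a1: "\<forall>u v. square_lattice u v \<longrightarrow> f u \<noteq> f v" and
    a2: "\<forall>u v w. square_lattice u v \<and> square_lattice u w \<and> v \<noteq> w \<longrightarrow> \<bar>f u - f v\<bar> \<noteq> \<bar>f u - f w\<bar>" and
    a3: "\<forall>u v. square_lattice u v \<longrightarrow> \<bar>f u - f v\<bar> \<noteq> f u \<and> \<bar>f u - f v\<bar> \<noteq> f v"
    using P unfolding proper_td_labeling_def by blast+
  have ne: "(a+1,b) \<noteq> (a-1,b)" "(a+1,b) \<noteq> (a,b+1)" "(a+1,b) \<noteq> (a,b-1)"
    "(a-1,b) \<noteq> (a,b+1)" "(a-1,b) \<noteq> (a,b-1)" "(a,b+1) \<noteq> (a,b-1)" by simp_all
  have ok: "okp (f (a,b)) (f q)" if "square_lattice (a,b) q" for q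
    unfolding okp_def using r a1 a3 that by blast
  have a2': "\<bar>f (a,b) - f v\<bar> \<noteq> \<bar>f (a,b) - f w\<bar>" if "v \<noteq> w" "square_lattice (a,b) v" "square_lattice (a,b) w" for v w
    using a2 that by blast
  show ?thesis unfolding x_def y1_def y2_def y3_def y4_def
    apply (intro conjI)
    using r apply blast
    apply (rule ok, rule adj)+
    apply (rule a2'[OF ne(1) adj(1) adj(2)])
    apply (rule a2'[OF ne(2) adj(1) adj(3)])
    apply (rule a2'[OF ne(3) adj(1) adj(4)])
    apply (rule a2'[OF ne(4) adj(2) adj(3)])
    apply (rule a2'[OF ne(5) adj(2) adj(4)])
    apply (rule a2'[OF ne(6) adj(3) adj(4)])
    done
qed

lemma kill:
  assumes "x \<in> {1..7} \<and> okp x y1 \<and> okp x y2 \<and> okp x y3 \<and> okp x y4 \<and>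
    \<bar>x-y1\<bar> \<noteq> \<bar>x-y2\<bar> \<and> \<bar>x-y1\<bar> \<noteq> \<bar>x-y3\<bar> \<and> \<bar>x-y1\<bar> \<noteq> \<bar>x-y4\<bar> \<and>
    \<bar>x-y2\<bar> \<noteq> \<bar>x-y3\<bar> \<and> \<bar>x-y2\<bar> \<noteq> \<bar>x-y4\<bar> \<and> \<bar>x-y3\<bar> \<noteq> \<bar>x-y4\<bar>"
  and "\<And>y. okp x y \<Longrightarrow> y \<in> {y1,y2,y3,y4} \<Longrightarrow> \<bar>x-y\<bar> \<in> {p,q,r}"
  shows False
proof -
  have "\<bar>x-y1\<bar> \<in> {p,q,r}" "\<bar>x-y2\<bar> \<in> {p,q,r}" "\<bar>x-y3\<bar> \<in> {p,q,r}" "\<bar>x-y4\<bar> \<in> {p,q,r}"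
    using assms by blast+
  then show False using assms(1) pig by blast
qed

lemma lower:
  assumes P: "proper_td_labeling square_lattice k f" and k: "k \<le> 7"
  shows False
proof -
  note L = loc[OF P k]
  have no3: "f (a,b) \<noteq> 3" for a b
  proof
    assume h: "f (a,b) = 3"
    show False using kill[OF L[of a b, unfolded h]] d3 by blast
  qed
  have no4: "f (a,b) \<noteq> 4" for a b
  proof
    assume h: "f (a,b) = 4"
    show False using kill[OF L[of a b, unfolded h]] d4 by blast
  qed
  have no2: "f (a,b) \<noteq> 2" for a b
  proof
    assume h: "f (a,b) = 2"
    show False using kill[OF L[of a b, unfolded h]] d2 no3 by blast
  qed
  have no5: "f (a,b) \<noteq> 5" for a b
  proof
    assume h: "f (a,b) = 5"
    show False using kill[OF L[of a b, unfolded h]] d5 no2 by blast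
  qed
  have no6: "f (a,b) \<noteq> 6" for a b
  proof
    assume h: "f (a,b) = 6"
    show False using kill[OF L[of a b, unfolded h]] d6 no2 by blast
  qed
  have r17: "f (a,b) \<in> {1,7}" for a b
    using L[of a b] no2[of a b] no3[of a b] no4[of a b] no5[of a b] no6[of a b] unfolding int7 by auto
  have "f (0,0) = 1 \<or> f (0,0) = 7" using r17[of 0 0] by auto
  then show False
  proof
    assume h: "f (0,0) = 1"
    have "okp 1 (f (1,0))" "okp 1 (f (-1,0))" "\<bar>1 - f (1,0)\<bar> \<noteq> \<bar>1 - f (-1,0)\<bar>"
      using L[of 0 0, unfolded h] by simp_all
    then show False using r17[of 1 0] r17[of "-1" 0] d1 by metis
  next
    assume h: "f (0,0) = 7"
    have "okp 7 (f (1,0))" "okp 7 (f (-1,0))" "\<bar>7 - f (1,0)\<bar> \<noteq> \<bar>7 - f (-1,0)\<bar>"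
      using L[of 0 0, unfolded h] by simp_all
    then show False using r17[of 1 0] r17[of "-1" 0] d7 by metis
  qed
qed


definition g :: "int \<Rightarrow> int" where
  "g r = (if r = 0 then 1 else if r = 1 then 3 else if r = 2 then 7 else if r = 3 then 2 else if r = 4 then 6 else 8)"

definition lab :: "int \<times> int \<Rightarrow> int" where
  "lab p = g ((fst p + 2 * snd p) mod 6)"

lemma adj_iff: "square_lattice (a,b) v \<longleftrightarrow> v = (a+1,b) \<or> v = (a-1,b) \<or> v = (a,b+1) \<or> v = (a,b-1)"
  by (cases v) (auto simp: square_lattice_def abs_if)

lemma m1: "((x::int) mod 6 + c) mod 6 = (x + c) mod 6" by (rule mod_add_left_eq)

lemma labs:
  fixes a b :: int
  defines "r \<equiv> (a + 2*b) mod 6"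
  shows "lab (a,b) = g r" "lab (a+1,b) = g ((r+1) mod 6)" "lab (a-1,b) = g ((r+5) mod 6)"
    "lab (a,b+1) = g ((r+2) mod 6)" "lab (a,b-1) = g ((r+4) mod 6)"
proof -
  show "lab (a,b) = g r" unfolding lab_def r_def by simp
  have "(a + 1 + 2 * b) mod 6 = ((a + 2 * b) mod 6 + 1) mod 6"
    unfolding m1 by (simp add: algebra_simps)
  then show "lab (a+1,b) = g ((r+1) mod 6)" unfolding lab_def r_def by simp
  have "(a + 2 * (b + 1)) mod 6 = ((a + 2 * b) mod 6 + 2) mod 6"
    unfolding m1 by (simp add: algebra_simps)
  then show "lab (a,b+1) = g ((r+2) mod 6)" unfolding lab_def r_def by simp
  have e1: "a + 2*b + 5 = (a - 1 + 2*b) + 6" by simp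
  have "(a - 1 + 2 * b) mod 6 = ((a + 2 * b) mod 6 + 5) mod 6"
    unfolding m1 by (simp only: e1 mod_add_self2)
  then show "lab (a-1,b) = g ((r+5) mod 6)" unfolding lab_def r_def by simp
  have e2: "a + 2*b + 4 = (a + 2 * (b - 1)) + 6" by simp
  have "(a + 2 * (b - 1)) mod 6 = ((a + 2 * b) mod 6 + 4) mod 6"
    unfolding m1 by (simp only: e2 mod_add_self2)
  then show "lab (a,b-1) = g ((r+4) mod 6)" unfolding lab_def r_def by simp
qed

definition good :: "int \<Rightarrow> int \<Rightarrow> bool" where
 "good x y \<longleftrightarrow> x \<noteq> y \<and> \<bar>x - y\<bar> \<noteq> x \<and> \<bar>x - y\<bar> \<noteq> y"

lemma table:
  assumes "0 \<le> r" "r < 6"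
  defines "x \<equiv> g r" and "y1 \<equiv> g ((r+1) mod 6)" and "y2 \<equiv> g ((r+5) mod 6)" and "y3 \<equiv> g ((r+2) mod 6)" and "y4 \<equiv> g ((r+4) mod 6)"
  shows "good x y1 \<and> good x y2 \<and> good x y3 \<and> good x y4 \<and>
    \<bar>x-y1\<bar> \<noteq> \<bar>x-y2\<bar> \<and> \<bar>x-y1\<bar> \<noteq> \<bar>x-y3\<bar> \<and> \<bar>x-y1\<bar> \<noteq> \<bar>x-y4\<bar> \<and>
    \<bar>x-y2\<bar> \<noteq> \<bar>x-y3\<bar> \<and> \<bar>x-y2\<bar> \<noteq> \<bar>x-y4\<bar> \<and> \<bar>x-y3\<bar> \<noteq> \<bar>x-y4\<bar>"
proof -
  have "r = 0 \<or> r = 1 \<or> r = 2 \<or> r = 3 \<or> r = 4 \<or> r = 5" using assms by auto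
  then show ?thesis unfolding x_def y1_def y2_def y3_def y4_def
    by (elim disjE) (simp_all add: g_def good_def)
qed

lemma upper: "proper_td_labeling square_lattice 8 lab"
proof -
  have T: "good (lab (a,b)) (lab (a+1,b)) \<and> good (lab (a,b)) (lab (a-1,b)) \<and> good (lab (a,b)) (lab (a,b+1)) \<and> good (lab (a,b)) (lab (a,b-1)) \<and>
    \<bar>lab (a,b)-lab (a+1,b)\<bar> \<noteq> \<bar>lab (a,b)-lab (a-1,b)\<bar> \<and> \<bar>lab (a,b)-lab (a+1,b)\<bar> \<noteq> \<bar>lab (a,b)-lab (a,b+1)\<bar> \<and>
    \<bar>lab (a,b)-lab (a+1,b)\<bar> \<noteq> \<bar>lab (a,b)-lab (a,b-1)\<bar> \<and>
    \<bar>lab (a,b)-lab (a-1,b)\<bar> \<noteq> \<bar>lab (a,b)-lab (a,b+1)\<bar> \<and> \<bar>lab (a,b)-lab (a-1,b)\<bar> \<noteq> \<bar>lab (a,b)-lab (a,b-1)\<bar> \<and>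
    \<bar>lab (a,b)-lab (a,b+1)\<bar> \<noteq> \<bar>lab (a,b)-lab (a,b-1)\<bar>" for a b
  proof -
    have tab: "0 \<le> (a+2*b) mod 6" "(a+2*b) mod 6 < 6" by simp_all
    show ?thesis by (rule table[OF tab, unfolded labs[of a b, symmetric]])
  qed
  have G: "good (lab u) (lab v)" if "square_lattice u v" for u v
  proof -
    obtain a b where u: "u = (a,b)" by (cases u)
    show ?thesis using that T[of a b] unfolding u adj_iff by auto
  qed
  have D: "\<bar>lab u - lab v\<bar> \<noteq> \<bar>lab u - lab w\<bar>" if "square_lattice u v" "square_lattice u w" "v \<noteq> w" for u v w
  proof -
    obtain a b where u: "u = (a,b)" by (cases u)
    have "v = (a+1,b) \<or> v = (a-1,b) \<or> v = (a,b+1) \<or> v = (a,b-1)"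
         "w = (a+1,b) \<or> w = (a-1,b) \<or> w = (a,b+1) \<or> w = (a,b-1)"
      using that unfolding u adj_iff by auto
    then show ?thesis using that(3) T[of a b] unfolding u
      by (elim disjE) (simp_all add: abs_minus_commute)
  qed
  have R: "lab v \<in> {1..int 8}" for v
  proof -
    have "0 \<le> (fst v + 2 * snd v) mod 6" "(fst v + 2 * snd v) mod 6 < 6" by simp_all
    then show ?thesis unfolding lab_def g_def by auto
  qed
  show ?thesis unfolding proper_td_labeling_def using G D R unfolding good_def by blast
qed

theorem mainTheorem2:
  shows "chi_td square_lattice = 8"
  unfolding chi_td_def
proof (rule Least_equality)
  show "0 < (8::nat) \<and> (\<exists>f. proper_td_labeling square_lattice 8 f)" using upper by auto
next
  fix y :: nat assume "0 < y \<and> (\<exists>f. proper_td_labeling square_lattice y f)"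
  then obtain f where f: "proper_td_labeling square_lattice y f" by blast
  show "8 \<le> y"
  proof (rule ccontr)
    assume "\<not> 8 \<le> y"
    then have "y \<le> 7" by simp
    then show False using lower f by blast
  qed
qed

end
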